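(* Let $G$ be a quasitopological group. Then $G$ is dense-ultraconnected if and only if the topology of $G$ is indiscrete.
   Context: A quasitopological group is a group with a topology for which multiplication is separately continuous and inversion is continuous; no separation axioms assumed. A space is ultraconnected if it contains no two disjoint non-empty closed subsets; a space is dense-ultraconnected if every dense subset of it (with the subspace topology) is ultraconnected. *)

theory Defs
  imports "HOL-Analysis.Analysis" "HOL-Algebra.Group"
begin

definition quasitopological_group :: "('a, 'b) monoid_scheme \<Rightarrow> 'a topology \<Rightarrow> bool" where
  "quasitopological_group G T \<longleftrightarrow>
     group G \<and> topspace T = carrier G \<and>
     (\<forall>a \<in> carrier G. continuous_map T T (\<lambda>x. a \<otimes>\<^bsub>G\<^esub> x)) \<and>
     (\<forall>a \<in> carrier G. continuous_map T T (\<lambda>x. x \<otimes>\<^bsub>G\<^esub> a)) \<and>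
     continuous_map T T (\<lambda>x. inv\<^bsub>G\<^esub> x)"

definition ultraconnected_space :: "'a topology \<Rightarrow> bool" where
  "ultraconnected_space X \<longleftrightarrow>
     \<not> (\<exists>A B. closedin X A \<and> closedin X B \<and> A \<noteq> {} \<and> B \<noteq> {} \<and> A \<inter> B = {})"

definition dense_ultraconnected :: "'a topology \<Rightarrow> bool" where
  "dense_ultraconnected X \<longleftrightarrow>
     (\<forall>D. D \<subseteq> topspace X \<and> X closure_of D = topspace X \<longrightarrow>
          ultraconnected_space (subtopology X D))"

definition indiscrete_space :: "'a topology \<Rightarrow> bool" where
  "indiscrete_space X \<longleftrightarrow> (\<forall>U. openin X U \<longrightarrow> U = {} \<or> U = topspace X)"

end

theory Submission
  imports Defs
begin

lemma qtg_sym: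
  assumes q: "quasitopological_group G T"
    and x: "x \<in> carrier G" and y: "y \<in> carrier G"
    and h: "y \<in> T closure_of {x}"
  shows "x \<in> T closure_of {y}"
proof (rule ccontr)
  assume nx: "x \<notin> T closure_of {y}"
  have gr: "group G" and ts: "topspace T = carrier G"
    and L: "\<forall>a \<in> carrier G. continuous_map T T (\<lambda>z. a \<otimes>\<^bsub>G\<^esub> z)"
    and R: "\<forall>a \<in> carrier G. continuous_map T T (\<lambda>z. z \<otimes>\<^bsub>G\<^esub> a)"
    and I: "continuous_map T T (\<lambda>z. inv\<^bsub>G\<^esub> z)"
    using q unfolding quasitopological_group_def by auto
  from nx x ts obtain V where V: "openin T V" "x \<in> V" "y \<notin> V"
    by (auto simp: in_closure_of)
  define f where "f = (\<lambda>z. z \<otimes>\<^bsub>G\<^esub> y) \<circ> (\<lambda>z. x \<otimes>\<^bsub>G\<^esub> z) \<circ> (\<lambda>z. inv\<^bsub>G\<^esub> z)"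
  have cf: "continuous_map T T f"
    unfolding f_def using L R I x y by (intro continuous_map_compose) auto
  define W where "W = {z \<in> topspace T. f z \<in> V}"
  have W: "openin T W" unfolding W_def using cf V(1) by (rule openin_continuous_map_preimage)
  have fy: "f y = x" unfolding f_def using gr x y
    by (simp add: group.inv_closed group.r_inv group.l_inv monoid.m_assoc group.is_monoid monoid.r_one monoid.l_one)
  have fx: "f x = y" unfolding f_def using gr x y
    by (simp add: group.inv_closed group.r_inv group.l_inv monoid.m_assoc group.is_monoid monoid.r_one monoid.l_one)
  have "y \<in> W" using fy V y ts unfolding W_def by auto
  moreover have "x \<notin> W" using fx V unfolding W_def by auto
  ultimately show False using h W by (auto simp: in_closure_of)
qed

theorem mainTheorem20:
  fixes G :: "('a, 'b) monoid_scheme" and T :: "'a topology"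
  assumes "quasitopological_group G T"
  shows "dense_ultraconnected T \<longleftrightarrow> indiscrete_space T"
proof
  assume du: "dense_ultraconnected T"
  have ts: "topspace T = carrier G" using assms unfolding quasitopological_group_def by auto
  have uc: "ultraconnected_space T"
    using du unfolding dense_ultraconnected_def
    by (metis closure_of_topspace order_refl subtopology_topspace)
  show "indiscrete_space T"
    unfolding indiscrete_space_def
  proof (intro allI impI)
    fix U assume U: "openin T U"
    show "U = {} \<or> U = topspace T"
    proof (cases "U = {}")
      case False
      then obtain y where yU: "y \<in> U" by auto
      have yt: "y \<in> topspace T" using U yU openin_subset by blast
      have "topspace T \<subseteq> U"
      proof
        fix x assume xt: "x \<in> topspace T"
        have "T closure_of {x} \<inter> T closure_of {y} \<noteq> {}"
          using uc xt yt unfolding ultraconnected_space_def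
          by (metis closedin_closure_of closure_of_eq_empty empty_not_insert insert_subset empty_subsetI)
        then obtain z where z1: "z \<in> T closure_of {x}" and z2: "z \<in> T closure_of {y}" by auto
        have zt: "z \<in> topspace T" using z1 in_closure_of by fastforce
        have "x \<in> T closure_of {z}" using qtg_sym[OF assms] z1 xt zt ts by auto
        moreover have "T closure_of {z} \<subseteq> T closure_of {y}"
          using z2 by (simp add: closure_of_minimal)
        ultimately have "x \<in> T closure_of {y}" by auto
        hence "y \<in> T closure_of {x}" using qtg_sym[OF assms] xt yt ts by auto
        thus "x \<in> U" using U yU by (auto simp: in_closure_of)
      qed
      thus ?thesis using U openin_subset by blast
    qed simp
  qed
next
  assume ind: "indiscrete_space T"
  show "dense_ultraconnected T"
    unfolding dense_ultraconnected_def ultraconnected_space_def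
  proof (intro allI impI notI)
    fix D assume D: "D \<subseteq> topspace T \<and> T closure_of D = topspace T"
    assume "\<exists>A B. closedin (subtopology T D) A \<and> closedin (subtopology T D) B \<and> A \<noteq> {} \<and> B \<noteq> {} \<and> A \<inter> B = {}"
    then obtain A B where A: "closedin (subtopology T D) A" and B: "closedin (subtopology T D) B"
      and ne: "A \<noteq> {}" "B \<noteq> {}" "A \<inter> B = {}" by blast
    have cl: "\<And>C. closedin (subtopology T D) C \<Longrightarrow> C \<noteq> {} \<Longrightarrow> C = D"
    proof -
      fix C assume C: "closedin (subtopology T D) C" "C \<noteq> {}"
      then obtain K where K: "closedin T K" "C = K \<inter> D" by (auto simp: closedin_subtopology)
      have "openin T (topspace T - K)" using K by blast
      hence "topspace T - K = {} \<or> topspace T - K = topspace T" using ind unfolding indiscrete_space_def by blast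
      thus "C = D" using K C D closedin_subset by blast
    qed
    show False using cl[OF A ne(1)] cl[OF B ne(2)] ne by auto
  qed
qed

end
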